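(* Let $\mathcal{X}$ be a set, $p\ge2$, $\Theta$ a parameter set, and for each $\theta\in\Theta$ let $s^\theta:\mathcal{X}\to\mathbb{R}^p$ be a score map with predictor $h_\theta$ and pairwise reduction $g_\theta$. Let $\mathcal{H}_\Theta=\{h_\theta:\theta\in\Theta\}$ and $\mathcal{G}_\Theta=\{g_\theta:\theta\in\Theta\}$. If a set $S=\{x^{(1)},\dots,x^{(n)}\}\subseteq\mathcal{X}$ of $n$ distinct points is Natarajan-shattered by $\mathcal{H}_\Theta$, then \[ 2^n\ \le\ \Pi_{\mathcal{G}_\Theta}\big(n\,p(p-1)/2\big). \]
   Context: Labels are $[p]=\{1,\dots,p\}$. The predictor is $h_\theta(x)=\ell$ if $s^\theta_\ell(x)>s^\theta_k(x)$ for all $k\ne\ell$, and $h_\theta(x)=\bot$ otherwise ($\bot\notin[p]$). The pairwise reduction is defined on $\mathcal{Z}_{\mathrm{pair}}=\mathcal{X}\times\{(i,j)\in[p]^2:i<j\}$ by $g_\theta(x,i,j)=+1$ if $s^\theta_i(x)\ge s^\theta_j(x)$ and $-1$ otherwise. A finite $S\subseteq\mathcal{X}$ is Natarajan-shattered by a class $\mathcal{H}$ of functions $\mathcal{X}\to[p]\cup\{\bot\}$ if there exist $f_1,f_2:S\to[p]$ with $f_1(x)\ne f_2(x)$ for all $x\in S$ such that for every $b\in\{1,2\}^S$ some $h\in\mathcal{H}$ satisfies $h(x)=f_{b(x)}(x)$ for all $x\in S$. For a class $\mathcal{B}\subseteq\{-1,+1\}^{\mathcal{Z}}$, the growth function is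 $\Pi_{\mathcal{B}}(N)=\max\{|\{b|_T:b\in\mathcal{B}\}|:\ T\subseteq\mathcal{Z},|T|=N\}$. *)

theory Defs
  imports Complex_Main "HOL-Library.FuncSet"
begin

text \<open>Labels are {1..p}; the abstention symbol is None. A score map for parameter t is
  s t :: 'x => nat => real, where s t x l is the l-th score (only l in {1..p} matters).\<close>

definition predictor :: "nat \<Rightarrow> ('t \<Rightarrow> 'x \<Rightarrow> nat \<Rightarrow> real) \<Rightarrow> 't \<Rightarrow> 'x \<Rightarrow> nat option" where
  "predictor p s t x =
     (if \<exists>l\<in>{1..p}. \<forall>k\<in>{1..p}. k \<noteq> l \<longrightarrow> s t x l > s t x k
      then Some (THE l. l \<in> {1..p} \<and> (\<forall>k\<in>{1..p}. k \<noteq> l \<longrightarrow> s t x l > s t x k))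
      else None)"

definition pair_domain :: "'x set \<Rightarrow> nat \<Rightarrow> ('x \<times> nat \<times> nat) set" where
  "pair_domain X p = X \<times> {(i, j). 1 \<le> i \<and> i < j \<and> j \<le> p}"

definition pair_reduction :: "('t \<Rightarrow> 'x \<Rightarrow> nat \<Rightarrow> real) \<Rightarrow> 't \<Rightarrow> 'x \<times> nat \<times> nat \<Rightarrow> int" where
  "pair_reduction s t z = (case z of (x, i, j) \<Rightarrow> if s t x i \<ge> s t x j then 1 else -1)"

definition natarajan_shattered :: "nat \<Rightarrow> ('x \<Rightarrow> nat option) set \<Rightarrow> 'x set \<Rightarrow> bool" where
  "natarajan_shattered p H S \<longleftrightarrow> finite S \<and>
     (\<exists>f1 f2. (\<forall>x\<in>S. f1 x \<in> {1..p} \<and> f2 x \<in> {1..p} \<and> f1 x \<noteq> f2 x) \<and>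
        (\<forall>b. (\<forall>x\<in>S. b x \<in> {1::nat, 2}) \<longrightarrow>
           (\<exists>h\<in>H. \<forall>x\<in>S. h x = Some (if b x = 1 then f1 x else f2 x))))"

definition growth :: "'z set \<Rightarrow> ('z \<Rightarrow> int) set \<Rightarrow> nat \<Rightarrow> nat" where
  "growth Z B N = Max {card ((\<lambda>b. restrict b T) ` B) | T. T \<subseteq> Z \<and> finite T \<and> card T = N}"

end

theory Submission
  imports Defs
begin

lemma predictor_SomeD:
  assumes "predictor p s t x = Some l"
  shows "l \<in> {1..p} \<and> (\<forall>k\<in>{1..p}. k \<noteq> l \<longrightarrow> s t x l > s t x k)"
proof -
  let ?P = "\<lambda>l. l \<in> {1..p} \<and> (\<forall>k\<in>{1..p}. k \<noteq> l \<longrightarrow> s t x l > s t x k)"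
  have C: "\<exists>l\<in>{1..p}. \<forall>k\<in>{1..p}. k \<noteq> l \<longrightarrow> s t x l > s t x k"
  proof (rule ccontr)
    assume nc: "\<not> (\<exists>l\<in>{1..p}. \<forall>k\<in>{1..p}. k \<noteq> l \<longrightarrow> s t x l > s t x k)"
    have "predictor p s t x = None" unfolding predictor_def by (rule if_not_P[OF nc])
    with assms show False by simp
  qed
  then obtain l0 where l0: "?P l0" by blast
  have uniq: "\<And>m. ?P m \<Longrightarrow> m = l0"
  proof -
    fix m assume m: "?P m"
    show "m = l0"
    proof (rule ccontr)
      assume ne: "m \<noteq> l0"
      have am: "\<forall>k\<in>{1..p}. k \<noteq> m \<longrightarrow> s t x k < s t x m" using m by (rule conjunct2)
      have al: "\<forall>k\<in>{1..p}. k \<noteq> l0 \<longrightarrow> s t x k < s t x l0" using l0 by (rule conjunct2)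
      have "s t x m > s t x l0" using bspec[OF am conjunct1[OF l0]] ne by simp
      moreover have "s t x l0 > s t x m" using bspec[OF al conjunct1[OF m]] ne by simp
      ultimately show False by simp
    qed
  qed
  have "(THE l. ?P l) = l0" by (rule the_equality) (rule l0, erule uniq)
  moreover have "predictor p s t x = Some (THE l. ?P l)"
    unfolding predictor_def by (rule if_P[OF C])
  ultimately have "l = l0" using assms by simp
  with l0 show ?thesis by simp
qed

lemma pr_range: "pair_reduction s t z \<in> {-1, 1}"
  unfolding pair_reduction_def by (cases z) auto

lemma restr_sub: "(\<lambda>b. restrict b T) ` (pair_reduction s ` Theta) \<subseteq> T \<rightarrow>\<^sub>E {-1, 1}"
proof (intro subsetI, elim imageE)
  fix y b t assume "y = restrict b T" "b = pair_reduction s t"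
  then show "y \<in> T \<rightarrow>\<^sub>E {-1, 1}"
    by (simp only: restrict_PiE_iff) (intro ballI pr_range)
qed

definition Pairs :: "nat \<Rightarrow> (nat \<times> nat) set" where
  "Pairs p = {(i, j). 1 \<le> i \<and> i < j \<and> j \<le> p}"

lemma Pairs_finite: "finite (Pairs p)"
proof -
  have "Pairs p \<subseteq> {0..p} \<times> {0..p}" unfolding Pairs_def by auto
  then show ?thesis by (rule finite_subset) auto
qed

lemma Pairs_card: "2 * card (Pairs p) = p * (p - 1)"
proof (induction p)
  case 0
  have "Pairs 0 = {}" unfolding Pairs_def by auto
  then show ?case by simp
next
  case (Suc p)
  have eq: "Pairs (Suc p) = Pairs p \<union> (\<lambda>i. (i, Suc p)) ` {1..p}"
    unfolding Pairs_def by auto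
  have disj: "Pairs p \<inter> (\<lambda>i. (i, Suc p)) ` {1..p} = {}"
    unfolding Pairs_def by auto
  have c2: "card ((\<lambda>i. (i, Suc p)) ` {1..p}) = p"
    by (subst card_image) (auto simp: inj_on_def)
  have "card (Pairs (Suc p)) = card (Pairs p) + p"
    unfolding eq by (subst card_Un_disjoint) (use disj c2 Pairs_finite in auto)
  moreover have "Suc p * (Suc p - 1) = p * (p - 1) + 2 * p"
    by (cases p) (simp_all add: algebra_simps)
  ultimately show ?case using Suc.IH by linarith
qed

theorem mainTheorem15:
  fixes X :: "'x set" and Theta :: "'t set" and s :: "'t \<Rightarrow> 'x \<Rightarrow> nat \<Rightarrow> real"
    and S :: "'x set" and n p :: nat
  assumes "p \<ge> 2"
    and "S \<subseteq> X" and "finite S" and "card S = n"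
    and "natarajan_shattered p (predictor p s ` Theta) S"
  shows "2 ^ n \<le> growth (pair_domain X p) (pair_reduction s ` Theta) (n * (p * (p - 1)) div 2)"
proof -
  let ?N = "n * (p * (p - 1)) div 2"
  let ?B = "pair_reduction s ` Theta"
  define T where "T = S \<times> Pairs p"
  have Tfin: "finite T" unfolding T_def using assms(3) Pairs_finite by auto
  have Tcard: "card T = ?N"
  proof -
    have "card T = n * card (Pairs p)" unfolding T_def using assms(4) by (simp add: card_cartesian_product)
    moreover have h: "n * (p * (p - 1)) = 2 * (n * card (Pairs p))" using Pairs_card[of p] by simp
    ultimately show ?thesis by (simp only: h)
  qed
  have Tsub: "T \<subseteq> pair_domain X p" unfolding T_def pair_domain_def Pairs_def using assms(2) by auto
  define C where "C = {card ((\<lambda>b. restrict b T') ` ?B) | T'. T' \<subseteq> pair_domain X p \<and> finite T' \<and> card T' = ?N}"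
  have Cfin: "finite C"
  proof -
    have "C \<subseteq> {0..2 ^ ?N}"
    proof
      fix c assume "c \<in> C"
      then obtain T' where T': "finite T'" "card T' = ?N" and c: "c = card ((\<lambda>b. restrict b T') ` ?B)"
        unfolding C_def by auto
      have sub: "(\<lambda>b. restrict b T') ` ?B \<subseteq> T' \<rightarrow>\<^sub>E {-1, 1}"
        by (rule restr_sub)
      have "c \<le> card (T' \<rightarrow>\<^sub>E {-1::int, 1})"
        unfolding c by (rule card_mono) (use sub T' in \<open>auto intro: finite_PiE\<close>)
      also have "\<dots> = 2 ^ ?N" using T' by (simp add: card_PiE prod_constant numeral_2_eq_2)
      finally show "c \<in> {0..2 ^ ?N}" by simp
    qed
    then show ?thesis by (rule finite_subset) simp
  qed
  have inC: "card ((\<lambda>b. restrict b T) ` ?B) \<in> C" unfolding C_def using Tfin Tcard Tsub by blast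
  obtain f1 f2 where ff: "\<forall>x\<in>S. f1 x \<in> {1..p} \<and> f2 x \<in> {1..p} \<and> f1 x \<noteq> f2 x"
    and sh: "\<forall>b. (\<forall>x\<in>S. b x \<in> {1::nat, 2}) \<longrightarrow>
           (\<exists>h\<in>predictor p s ` Theta. \<forall>x\<in>S. h x = Some (if b x = 1 then f1 x else f2 x))"
    using assms(5) unfolding natarajan_shattered_def by blast
  have "\<forall>b\<in>S \<rightarrow>\<^sub>E {1::nat, 2}. \<exists>t\<in>Theta. \<forall>x\<in>S. predictor p s t x = Some (if b x = 1 then f1 x else f2 x)"
    using sh by (auto simp: PiE_def Pi_def)
  then obtain th where th: "\<And>b. b \<in> S \<rightarrow>\<^sub>E {1::nat, 2} \<Longrightarrow> th b \<in> Theta \<and>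
      (\<forall>x\<in>S. predictor p s (th b) x = Some (if b x = 1 then f1 x else f2 x))"
    by metis
  define F where "F = (\<lambda>b. restrict (pair_reduction s (th b)) T)"
  have injF: "inj_on F (S \<rightarrow>\<^sub>E {1::nat, 2})"
  proof (rule inj_onI, rule ccontr)
    fix b b' assume b: "b \<in> S \<rightarrow>\<^sub>E {1::nat, 2}" and b': "b' \<in> S \<rightarrow>\<^sub>E {1::nat, 2}"
      and eqF: "F b = F b'" and ne: "b \<noteq> b'"
    obtain x where xS: "x \<in> S" and bx: "b x \<noteq> b' x"
      using b b' ne by (metis PiE_ext)
    define l where "l = (if b x = 1 then f1 x else f2 x)"
    define l' where "l' = (if b' x = 1 then f1 x else f2 x)"
    have b1: "b x = 1 \<or> b x = 2" using b xS by (auto simp: PiE_def Pi_def)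
    have b2: "b' x = 1 \<or> b' x = 2" using b' xS by (auto simp: PiE_def Pi_def)
    have bb: "(b x = 1 \<and> b' x = 2) \<or> (b x = 2 \<and> b' x = 1)" using b1 b2 bx by auto
    have fne: "f1 x \<noteq> f2 x" using ff xS by blast
    have ll: "l \<noteq> l'" using bb fne unfolding l_def l'_def by auto
    have P1: "l \<in> {1..p} \<and> (\<forall>k\<in>{1..p}. k \<noteq> l \<longrightarrow> s (th b) x l > s (th b) x k)"
      by (rule predictor_SomeD) (use th[OF b] xS in \<open>simp add: l_def\<close>)
    have P2: "l' \<in> {1..p} \<and> (\<forall>k\<in>{1..p}. k \<noteq> l' \<longrightarrow> s (th b') x l' > s (th b') x k)"
      by (rule predictor_SomeD) (use th[OF b'] xS in \<open>simp add: l'_def\<close>)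
    have lin: "l \<in> {1..p}" using P1 by (rule conjunct1)
    have lin': "l' \<in> {1..p}" using P2 by (rule conjunct1)
    have A1: "\<forall>k\<in>{1..p}. k \<noteq> l \<longrightarrow> s (th b) x l > s (th b) x k" using P1 by (rule conjunct2)
    have A2: "\<forall>k\<in>{1..p}. k \<noteq> l' \<longrightarrow> s (th b') x l' > s (th b') x k" using P2 by (rule conjunct2)
    have g1: "s (th b) x l > s (th b) x l'" using bspec[OF A1 lin'] ll by simp
    have g2: "s (th b') x l' > s (th b') x l" using bspec[OF A2 lin] ll by simp
    define z where "z = (x, min l l', max l l')"
    have zT: "z \<in> T" unfolding z_def T_def Pairs_def using xS lin lin' ll by (auto simp: min_def max_def)
    have eqz: "pair_reduction s (th b) z = pair_reduction s (th b') z"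
      using eqF zT unfolding F_def by (metis restrict_apply')
    show False
    proof (cases "l < l'")
      case True
      note g1 g2
      moreover have "z = (x, l, l')" using True unfolding z_def by simp
      ultimately show False using eqz by (simp add: pair_reduction_def)
    next
      case False
      then have lt: "l' < l" using ll by simp
      note g1 g2
      moreover have "z = (x, l', l)" using lt unfolding z_def by simp
      ultimately show False using eqz by (simp add: pair_reduction_def)
    qed
  qed
  have "(2::nat) ^ n = card (S \<rightarrow>\<^sub>E {1::nat, 2})"
    using assms(3,4) by (simp add: card_PiE prod_constant numeral_2_eq_2)
  also have "\<dots> = card (F ` (S \<rightarrow>\<^sub>E {1::nat, 2}))" using injF by (simp add: card_image)
  also have "\<dots> \<le> card ((\<lambda>b. restrict b T) ` ?B)"
  proof (rule card_mono)
    have sub: "(\<lambda>b. restrict b T) ` ?B \<subseteq> T \<rightarrow>\<^sub>E {-1, 1}"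
      by (rule restr_sub)
    show "finite ((\<lambda>b. restrict b T) ` ?B)"
      by (rule finite_subset[OF sub]) (use Tfin in \<open>auto intro: finite_PiE\<close>)
    show "F ` (S \<rightarrow>\<^sub>E {1, 2}) \<subseteq> (\<lambda>b. restrict b T) ` ?B"
      unfolding F_def using th by auto
  qed
  also have "\<dots> \<le> Max C" using Cfin inC by (rule Max_ge)
  also have "Max C = growth (pair_domain X p) ?B ?N" unfolding C_def growth_def by simp
  finally show ?thesis .
qed

end
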